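(* Let $q>0$, $q\neq1$, let $x(s)=c_1q^{s}+c_2q^{-s}+c_3$ with $q^{\mu}:=c_1/c_2$ (for a $q$-linear lattice see the convention in the context), let $\tilde\sigma,\tilde\tau$ be polynomials of degrees at most $2$ and $1$, $\sigma(s)=\tilde\sigma(x(s))-\tfrac12\tilde\tau(x(s))\Delta x(s-\tfrac12)$, $\tau(s)=\tilde\tau(x(s))$, and let $A(s)$ be a continuous non-vanishing function. Define $$H(s;q):=-\frac{\sqrt{\sigma(-s-\mu+1)\sigma(s)}}{\nabla x(s)}e^{-\partial_s}-\frac{\sqrt{\sigma(-s-\mu)\sigma(s+1)}}{\Delta x(s)}e^{\partial_s}+\left(\frac{\sigma(-s-\mu)}{\Delta x(s)}+\frac{\sigma(s)}{\nabla x(s)}\right)I,\qquad \mathfrak H(s;q):=\frac{1}{\nabla x_1(s)}A(s)H(s;q)\frac{1}{A(s)},$$ and for real $\alpha$ $$a(s;q):=\mathfrak a^{\downarrow}_\alpha(s;q)=\frac{A(s)}{\sqrt{\nabla x_1(s)}}e^{-\alpha\partial_s}\left(e^{\partial_s}\sqrt{\frac{\sigma(s)}{\nabla x(s)}}-\sqrt{\frac{\sigma(-s-\mu)}{\Delta x(s)}}\right)\frac{1}{A(s)},$$ $$b(s;q):=\mathfrak a^{\uparrow}_\alpha(s;q)=\frac{1}{\nabla x_1(s)}A(s)\left(\sqrt{\frac{\sigma(s)}{\nabla x(s)}}e^{-\partial_s}-\sqrt{\frac{\sigma(-s-\mu)}{\Delta x(s)}}\right)e^{\alpha\partial_s}\frac{\sqrt{\nabla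 x_1(s)}}{A(s)}.$$ These operators factorize $\mathfrak H(s;q)=b(s;q)a(s;q)$, and, for real numbers $\varsigma$ and $\Lambda$, they satisfy $a(s;q)b(s;q)-\varsigma\, b(s;q)a(s;q)=\Lambda I$ if and only if the following two conditions hold identically in $s$: $$\frac{\nabla x(s)}{\nabla x_1(s-\alpha)}\sqrt{\frac{\nabla x_1(s-1)\nabla x_1(s)}{\nabla x(s-\alpha)\Delta x(s-\alpha)}}\sqrt{\frac{\sigma(s-\alpha)\sigma(-s-\mu+\alpha)}{\sigma(s)\sigma(-s-\mu+1)}}=\varsigma,$$ and $$\frac{1}{\Delta x(s-\alpha)}\left(\frac{\sigma(s-\alpha+1)}{\nabla x_1(s-\alpha+1)}+\frac{\sigma(-s-\mu+\alpha)}{\nabla x_1(s-\alpha)}\right)-\varsigma\,\frac{1}{\nabla x_1(s)}\left(\frac{\sigma(s)}{\nabla x(s)}+\frac{\sigma(-s-\mu)}{\Delta x(s)}\right)=\Lambda.$$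
   Context: Notation: $\Delta f(s)=f(s+1)-f(s)$, $\nabla f(s)=f(s)-f(s-1)$; $x_1(s):=x(s+\tfrac12)$; $e^{\beta\partial_s}f(s)=f(s+\beta)$; functions inside operator products act as multiplication operators and products are compositions; $I$ is the identity. Convention: for a $q$-linear lattice $x(s)=c\,q^{\pm s}+c_3$, each $\sigma(-s-\mu+\beta)$ is read as $\sigma(t)+\tau(t)\Delta x(t-\tfrac12)$ at $t=s-\beta$. Square roots are taken formally with fixed branches. *)

theory Defs
  imports "HOL-Analysis.Analysis" "HOL-Computational_Algebra.Polynomial"
begin

type_synonym op = "(real \<Rightarrow> complex) \<Rightarrow> (real \<Rightarrow> complex)"

definition qpow :: "real \<Rightarrow> complex \<Rightarrow> complex" where
  "qpow q z = exp (z * complex_of_real (ln q))"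

definition latx :: "real \<Rightarrow> real \<Rightarrow> real \<Rightarrow> real \<Rightarrow> complex \<Rightarrow> complex" where
  "latx q c1 c2 c3 z = of_real c1 * qpow q z + of_real c2 * qpow q (- z) + of_real c3"

text \<open>mu with q^mu = c1/c2 (some complex solution; principal logarithm).\<close>
definition qmu :: "real \<Rightarrow> real \<Rightarrow> real \<Rightarrow> complex" where
  "qmu q c1 c2 = Ln (complex_of_real (c1 / c2)) / complex_of_real (ln q)"

definition sigc :: "real poly \<Rightarrow> real poly \<Rightarrow> (complex \<Rightarrow> complex) \<Rightarrow> complex \<Rightarrow> complex" where
  "sigc st tt X z = poly (map_poly of_real st) (X z)
     - 1/2 * poly (map_poly of_real tt) (X z) * (X (z + 1/2) - X (z - 1/2))"

definition tauc :: "real poly \<Rightarrow> (complex \<Rightarrow> complex) \<Rightarrow> complex \<Rightarrow> complex" where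
  "tauc tt X z = poly (map_poly of_real tt) (X z)"

definition Dx :: "(complex \<Rightarrow> complex) \<Rightarrow> real \<Rightarrow> complex" where
  "Dx X s = X (of_real (s + 1)) - X (of_real s)"
definition Nx :: "(complex \<Rightarrow> complex) \<Rightarrow> real \<Rightarrow> complex" where
  "Nx X s = X (of_real s) - X (of_real (s - 1))"
text \<open>x_1(s) = x(s+1/2) and nabla x_1(s) = x_1(s) - x_1(s-1).\<close>
definition Nx1 :: "(complex \<Rightarrow> complex) \<Rightarrow> real \<Rightarrow> complex" where
  "Nx1 X s = X (of_real (s + 1/2)) - X (of_real (s - 1/2))"

definition sig :: "real poly \<Rightarrow> real poly \<Rightarrow> real \<Rightarrow> real \<Rightarrow> real \<Rightarrow> real \<Rightarrow> real \<Rightarrow> complex" where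
  "sig st tt q c1 c2 c3 s = sigc st tt (latx q c1 c2 c3) (of_real s)"

text \<open>The reflected sigma, i.e. sigma(-s-mu) at real s; for a q-linear lattice
  (exactly one of c1, c2 zero) it is read as sigma(s) + tau(s) Delta x(s - 1/2).
  sigma(-s-mu+beta) is then sigref(s - beta).\<close>
definition sigref :: "real poly \<Rightarrow> real poly \<Rightarrow> real \<Rightarrow> real \<Rightarrow> real \<Rightarrow> real \<Rightarrow> real \<Rightarrow> complex" where
  "sigref st tt q c1 c2 c3 s =
     (if c1 \<noteq> 0 \<and> c2 \<noteq> 0
      then sigc st tt (latx q c1 c2 c3) (- complex_of_real s - qmu q c1 c2)
      else sigc st tt (latx q c1 c2 c3) (of_real s)
           + tauc tt (latx q c1 c2 c3) (of_real s) * Dx (latx q c1 c2 c3) (s - 1/2))"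

definition Esh :: "real \<Rightarrow> op" where
  "Esh \<beta> f = (\<lambda>s. f (s + \<beta>))"
definition opadd :: "op \<Rightarrow> op \<Rightarrow> op" (infixl "\<oplus>\<^sub>o" 65) where
  "opadd T1 T2 = (\<lambda>f s. T1 f s + T2 f s)"
definition opsub :: "op \<Rightarrow> op \<Rightarrow> op" (infixl "\<ominus>\<^sub>o" 65) where
  "opsub T1 T2 = (\<lambda>f s. T1 f s - T2 f s)"
definition opneg :: "op \<Rightarrow> op" where
  "opneg T = (\<lambda>f s. - T f s)"
definition Mul :: "(real \<Rightarrow> complex) \<Rightarrow> op" where
  "Mul g f = (\<lambda>s. g s * f s)"

text \<open>Square roots are formal with fixed branches: Rs, Rm, Rd, Rw are
  fixed square roots of sigma(s), sigma(-s-mu), Delta x(s), nabla x_1(s); the square root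
  of a product/quotient of such factors is the corresponding product/quotient of roots.
  sg = sigma, sr = sigma(-s-mu), dx = Delta x, nx = nabla x, w = nabla x_1.\<close>
definition Hop :: "(real \<Rightarrow> complex) \<Rightarrow> (real \<Rightarrow> complex) \<Rightarrow> (real \<Rightarrow> complex) \<Rightarrow> (real \<Rightarrow> complex)
   \<Rightarrow> (real \<Rightarrow> complex) \<Rightarrow> (real \<Rightarrow> complex) \<Rightarrow> op" where
  "Hop sg sr dx nx Rs Rm =
     opneg (Mul (\<lambda>s. Rm (s - 1) * Rs s / nx s) \<circ> Esh (-1))
     \<ominus>\<^sub>o (Mul (\<lambda>s. Rm s * Rs (s + 1) / dx s) \<circ> Esh 1)
     \<oplus>\<^sub>o Mul (\<lambda>s. sr s / dx s + sg s / nx s)"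

definition frakH :: "(real \<Rightarrow> complex) \<Rightarrow> (real \<Rightarrow> complex) \<Rightarrow> (real \<Rightarrow> complex) \<Rightarrow> (real \<Rightarrow> complex)
   \<Rightarrow> (real \<Rightarrow> complex) \<Rightarrow> (real \<Rightarrow> complex) \<Rightarrow> (real \<Rightarrow> complex) \<Rightarrow> (real \<Rightarrow> real) \<Rightarrow> op" where
  "frakH sg sr dx nx w Rs Rm A =
     Mul (\<lambda>s. 1 / w s) \<circ> Mul (\<lambda>s. of_real (A s)) \<circ> Hop sg sr dx nx Rs Rm
       \<circ> Mul (\<lambda>s. 1 / of_real (A s))"

text \<open>Lowering operator a^down_alpha; sqrt(sigma(s)/nabla x(s)) = Rs s / Rd (s-1),
  sqrt(sigma(-s-mu)/Delta x(s)) = Rm s / Rd s, sqrt(nabla x_1(s)) = Rw s.\<close>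
definition aop :: "real \<Rightarrow> (real \<Rightarrow> complex) \<Rightarrow> (real \<Rightarrow> complex) \<Rightarrow> (real \<Rightarrow> complex)
   \<Rightarrow> (real \<Rightarrow> complex) \<Rightarrow> (real \<Rightarrow> real) \<Rightarrow> op" where
  "aop \<alpha> Rs Rm Rd Rw A =
     Mul (\<lambda>s. of_real (A s) / Rw s) \<circ> Esh (- \<alpha>)
       \<circ> ((Esh 1 \<circ> Mul (\<lambda>s. Rs s / Rd (s - 1))) \<ominus>\<^sub>o Mul (\<lambda>s. Rm s / Rd s))
       \<circ> Mul (\<lambda>s. 1 / of_real (A s))"

definition bop :: "real \<Rightarrow> (real \<Rightarrow> complex) \<Rightarrow> (real \<Rightarrow> complex) \<Rightarrow> (real \<Rightarrow> complex)
   \<Rightarrow> (real \<Rightarrow> complex) \<Rightarrow> (real \<Rightarrow> complex) \<Rightarrow> (real \<Rightarrow> real) \<Rightarrow> op" where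
  "bop \<alpha> w Rs Rm Rd Rw A =
     Mul (\<lambda>s. 1 / w s) \<circ> Mul (\<lambda>s. of_real (A s))
       \<circ> ((Mul (\<lambda>s. Rs s / Rd (s - 1)) \<circ> Esh (-1)) \<ominus>\<^sub>o Mul (\<lambda>s. Rm s / Rd s))
       \<circ> Esh \<alpha> \<circ> Mul Rw \<circ> Mul (\<lambda>s. 1 / of_real (A s))"

text \<open>Points where all the data are non-degenerate, and the maximal set of s whose
  whole orbit s + Z + alpha Z is non-degenerate ("identically in s").\<close>
definition nondeg :: "(real \<Rightarrow> complex) \<Rightarrow> (real \<Rightarrow> complex) \<Rightarrow> (real \<Rightarrow> complex)
   \<Rightarrow> (real \<Rightarrow> complex) \<Rightarrow> real \<Rightarrow> bool" where
  "nondeg sg sr dx w t \<longleftrightarrow> sg t \<noteq> 0 \<and> sr t \<noteq> 0 \<and> dx t \<noteq> 0 \<and> w t \<noteq> 0"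

definition gooddom :: "real \<Rightarrow> (real \<Rightarrow> complex) \<Rightarrow> (real \<Rightarrow> complex) \<Rightarrow> (real \<Rightarrow> complex)
   \<Rightarrow> (real \<Rightarrow> complex) \<Rightarrow> real set" where
  "gooddom \<alpha> sg sr dx w =
     {s. \<forall>m n :: int. nondeg sg sr dx w (s + of_int m + of_int n * \<alpha>)}"

end

theory Submission imports Defs begin

lemma a_eq: "aop \<alpha> Rs Rm Rd Rw A f t = of_real (A t) / Rw t *
  (Rs (t-\<alpha>+1) / Rd (t-\<alpha>) * f (t-\<alpha>+1) / of_real (A (t-\<alpha>+1))
   - Rm (t-\<alpha>) / Rd (t-\<alpha>) * f (t-\<alpha>) / of_real (A (t-\<alpha>)))"
  by (simp add: aop_def Mul_def Esh_def opsub_def algebra_simps)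

lemma b_eq: "bop \<alpha> w Rs Rm Rd Rw A f t = of_real (A t) / w t *
  (Rs t / Rd (t-1) * Rw (t-1+\<alpha>) * f (t-1+\<alpha>) / of_real (A (t-1+\<alpha>))
   - Rm t / Rd t * Rw (t+\<alpha>) * f (t+\<alpha>) / of_real (A (t+\<alpha>)))"
  by (simp add: bop_def Mul_def Esh_def opsub_def algebra_simps)

lemma H_eq: "A s \<noteq> 0 \<Longrightarrow> frakH sg sr dx nx w Rs Rm A f s = 1 / w s * of_real (A s) *
   (- (Rm (s-1) * Rs s / nx s) * f (s-1) / of_real (A (s-1))
    - (Rm s * Rs (s+1) / dx s) * f (s+1) / of_real (A (s+1))
    + (sr s / dx s + sg s / nx s) * f s / of_real (A s))"
  by (simp add: frakH_def Hop_def Mul_def Esh_def opsub_def opadd_def opneg_def algebra_simps)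
     (simp add: field_simps)

lemma ba_eq:
  assumes "Rw (s-1+\<alpha>) \<noteq> 0" "Rw (s+\<alpha>) \<noteq> 0" "\<forall>t. A t \<noteq> 0" "Rd s \<noteq> 0" "Rd (s-1) \<noteq> 0" "w s \<noteq> 0"
  shows "bop \<alpha> w Rs Rm Rd Rw A (aop \<alpha> Rs Rm Rd Rw A f) s =
    of_real (A s) / w s * (Rs s / Rd (s-1) * (Rs s / Rd (s-1) * f s / of_real (A s)
        - Rm (s-1) / Rd (s-1) * f (s-1) / of_real (A (s-1)))
      - Rm s / Rd s * (Rs (s+1) / Rd s * f (s+1) / of_real (A (s+1))
        - Rm s / Rd s * f s / of_real (A s)))"
proof -
  have e1: "aop \<alpha> Rs Rm Rd Rw A f (s-1+\<alpha>) = of_real (A (s-1+\<alpha>)) / Rw (s-1+\<alpha>) *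
     (Rs s / Rd (s-1) * f s / of_real (A s) - Rm (s-1) / Rd (s-1) * f (s-1) / of_real (A (s-1)))"
    by (simp add: a_eq)
  have e2: "aop \<alpha> Rs Rm Rd Rw A f (s+\<alpha>) = of_real (A (s+\<alpha>)) / Rw (s+\<alpha>) *
     (Rs (s+1) / Rd s * f (s+1) / of_real (A (s+1)) - Rm s / Rd s * f s / of_real (A s))"
    by (simp add: a_eq add.commute)
  show ?thesis unfolding b_eq e1 e2 using assms by (simp add: field_simps)
qed

lemma ab_eq:
  assumes "\<forall>t. A t \<noteq> 0" "Rd (s-\<alpha>) \<noteq> 0" "Rd (s-\<alpha>-1) \<noteq> 0" "Rd (s-\<alpha>+1) \<noteq> 0"
    "Rw s \<noteq> 0" "w (s-\<alpha>) \<noteq> 0" "w (s-\<alpha>+1) \<noteq> 0"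
  shows "aop \<alpha> Rs Rm Rd Rw A (bop \<alpha> w Rs Rm Rd Rw A f) s =
    of_real (A s) / Rw s * (Rs (s-\<alpha>+1) / Rd (s-\<alpha>) / w (s-\<alpha>+1) *
       (Rs (s-\<alpha>+1) / Rd (s-\<alpha>) * Rw s * f s / of_real (A s)
        - Rm (s-\<alpha>+1) / Rd (s-\<alpha>+1) * Rw (s+1) * f (s+1) / of_real (A (s+1)))
     - Rm (s-\<alpha>) / Rd (s-\<alpha>) / w (s-\<alpha>) *
       (Rs (s-\<alpha>) / Rd (s-\<alpha>-1) * Rw (s-1) * f (s-1) / of_real (A (s-1))
        - Rm (s-\<alpha>) / Rd (s-\<alpha>) * Rw s * f s / of_real (A s)))"
proof -
  have e1: "bop \<alpha> w Rs Rm Rd Rw A f (s-\<alpha>+1) = of_real (A (s-\<alpha>+1)) / w (s-\<alpha>+1) *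
       (Rs (s-\<alpha>+1) / Rd (s-\<alpha>) * Rw s * f s / of_real (A s)
        - Rm (s-\<alpha>+1) / Rd (s-\<alpha>+1) * Rw (s+1) * f (s+1) / of_real (A (s+1)))"
    by (simp add: b_eq algebra_simps)
  have e2: "bop \<alpha> w Rs Rm Rd Rw A f (s-\<alpha>) = of_real (A (s-\<alpha>)) / w (s-\<alpha>) *
       (Rs (s-\<alpha>) / Rd (s-\<alpha>-1) * Rw (s-1) * f (s-1) / of_real (A (s-1))
        - Rm (s-\<alpha>) / Rd (s-\<alpha>) * Rw s * f s / of_real (A s))"
    by (simp add: b_eq algebra_simps)
  show ?thesis unfolding a_eq[of _ _ _ _ _ _ _ s] e1 e2 using assms by (simp add: field_simps)
qed


lemma decomp:
  assumes "\<forall>t. A t \<noteq> 0" "Rd (s-\<alpha>) \<noteq> 0" "Rd (s-\<alpha>-1) \<noteq> 0" "Rd (s-\<alpha>+1) \<noteq> 0"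
    "Rw s \<noteq> 0" "w (s-\<alpha>) \<noteq> 0" "w (s-\<alpha>+1) \<noteq> 0"
    "Rw (s-1+\<alpha>) \<noteq> 0" "Rw (s+\<alpha>) \<noteq> 0" "Rd s \<noteq> 0" "Rd (s-1) \<noteq> 0" "w s \<noteq> 0"
  shows "aop \<alpha> Rs Rm Rd Rw A (bop \<alpha> w Rs Rm Rd Rw A f) s
     - of_real vs * bop \<alpha> w Rs Rm Rd Rw A (aop \<alpha> Rs Rm Rd Rw A f) s
   = (- (of_real (A s) / Rw s * (Rm (s-\<alpha>) / Rd (s-\<alpha>) / w (s-\<alpha>)) * (Rs (s-\<alpha>) / Rd (s-\<alpha>-1) * Rw (s-1) / of_real (A (s-1))))
      + of_real vs * (of_real (A s) / w s * (Rs s / Rd (s-1)) * (Rm (s-1) / Rd (s-1) / of_real (A (s-1))))) * f (s-1)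
   + (of_real (A s) / Rw s * (Rs (s-\<alpha>+1) / Rd (s-\<alpha>) / w (s-\<alpha>+1)) * (Rs (s-\<alpha>+1) / Rd (s-\<alpha>) * Rw s / of_real (A s))
      + of_real (A s) / Rw s * (Rm (s-\<alpha>) / Rd (s-\<alpha>) / w (s-\<alpha>)) * (Rm (s-\<alpha>) / Rd (s-\<alpha>) * Rw s / of_real (A s))
      - of_real vs * (of_real (A s) / w s * (Rs s / Rd (s-1)) * (Rs s / Rd (s-1) / of_real (A s))
        + of_real (A s) / w s * (Rm s / Rd s) * (Rm s / Rd s / of_real (A s)))) * f s
   + (- (of_real (A s) / Rw s * (Rs (s-\<alpha>+1) / Rd (s-\<alpha>) / w (s-\<alpha>+1)) * (Rm (s-\<alpha>+1) / Rd (s-\<alpha>+1) * Rw (s+1) / of_real (A (s+1))))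
      + of_real vs * (of_real (A s) / w s * (Rm s / Rd s) * (Rs (s+1) / Rd s / of_real (A (s+1))))) * f (s+1)"
proof -
  note e1 = ab_eq[of A Rd s \<alpha> Rw w Rs Rm f, OF assms(1-7)]
  note e2 = ba_eq[of Rw s \<alpha> A Rd w Rs Rm f, OF assms(8,9,1,10-12)]
  show ?thesis unfolding e1 e2 by (simp add: divide_inverse algebra_simps)
qed


lemma core:
  fixes sg sr dx nx w Rs Rm Rd Rw :: "real \<Rightarrow> complex" and A :: "real \<Rightarrow> real"
    and \<alpha> vs Lam :: real
  assumes hA: "\<forall>t. A t \<noteq> 0" and hs: "\<forall>t. (Rs t)\<^sup>2 = sg t" and hm: "\<forall>t. (Rm t)\<^sup>2 = sr t"
    and hd: "\<forall>t. (Rd t)\<^sup>2 = dx t" and hw: "\<forall>t. (Rw t)\<^sup>2 = w t"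
    and hn: "\<forall>t. nx t = (Rd (t-1))\<^sup>2"
  shows "(\<forall>f. \<forall>s\<in>gooddom \<alpha> sg sr dx w. frakH sg sr dx nx w Rs Rm A f s
              = bop \<alpha> w Rs Rm Rd Rw A (aop \<alpha> Rs Rm Rd Rw A f) s)
     \<and> ((\<forall>f. \<forall>s\<in>gooddom \<alpha> sg sr dx w. aop \<alpha> Rs Rm Rd Rw A (bop \<alpha> w Rs Rm Rd Rw A f) s
            - of_real vs * bop \<alpha> w Rs Rm Rd Rw A (aop \<alpha> Rs Rm Rd Rw A f) s = of_real Lam * f s)
        \<longleftrightarrow>
        (\<forall>s\<in>gooddom \<alpha> sg sr dx w. nx s / w (s - \<alpha>)
                 * (Rw (s - 1) * Rw s / (Rd (s - \<alpha> - 1) * Rd (s - \<alpha>)))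
                 * (Rs (s - \<alpha>) * Rm (s - \<alpha>) / (Rs s * Rm (s - 1))) = of_real vs)
      \<and> (\<forall>s\<in>gooddom \<alpha> sg sr dx w. 1 / dx (s - \<alpha>) * (sg (s - \<alpha> + 1) / w (s - \<alpha> + 1) + sr (s - \<alpha>) / w (s - \<alpha>))
                 - of_real vs * (1 / w s) * (sg s / nx s + sr s / dx s) = of_real Lam))"
proof -
  define D where "D = gooddom \<alpha> sg sr dx w"
  have nzR: "Rs t \<noteq> 0 \<and> Rm t \<noteq> 0 \<and> Rd t \<noteq> 0 \<and> Rw t \<noteq> 0 \<and> w t \<noteq> 0"
    if "s \<in> D" "t = s + of_int m + of_int n * \<alpha>" for s t m n
  proof -
    have "nondeg sg sr dx w t" using that unfolding D_def gooddom_def by auto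
    then show ?thesis unfolding nondeg_def using hs hm hd hw
      by (metis power_zero_numeral)
  qed
  have Dp: "s + 1 \<in> D" if "s \<in> D" for s
  proof -
    have "nondeg sg sr dx w (s + 1 + of_int m + of_int n * \<alpha>)" for m n :: int
    proof -
      have "nondeg sg sr dx w (s + of_int (m+1) + of_int n * \<alpha>)"
        using that unfolding D_def gooddom_def by blast
      then show ?thesis by (simp add: algebra_simps)
    qed
    then show ?thesis unfolding D_def gooddom_def by auto
  qed
  have nzs: "Rs s \<noteq> 0 \<and> Rm s \<noteq> 0 \<and> Rd s \<noteq> 0 \<and> Rw s \<noteq> 0 \<and> w s \<noteq> 0
     \<and> Rs (s-1) \<noteq> 0 \<and> Rm (s-1) \<noteq> 0 \<and> Rd (s-1) \<noteq> 0 \<and> Rw (s-1) \<noteq> 0 \<and> w (s-1) \<noteq> 0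
     \<and> Rs (s+1) \<noteq> 0 \<and> Rm (s+1) \<noteq> 0 \<and> Rd (s+1) \<noteq> 0 \<and> Rw (s+1) \<noteq> 0 \<and> w (s+1) \<noteq> 0
     \<and> Rs (s-\<alpha>) \<noteq> 0 \<and> Rm (s-\<alpha>) \<noteq> 0 \<and> Rd (s-\<alpha>) \<noteq> 0 \<and> Rw (s-\<alpha>) \<noteq> 0 \<and> w (s-\<alpha>) \<noteq> 0
     \<and> Rs (s-\<alpha>-1) \<noteq> 0 \<and> Rm (s-\<alpha>-1) \<noteq> 0 \<and> Rd (s-\<alpha>-1) \<noteq> 0 \<and> Rw (s-\<alpha>-1) \<noteq> 0 \<and> w (s-\<alpha>-1) \<noteq> 0
     \<and> Rs (s-\<alpha>+1) \<noteq> 0 \<and> Rm (s-\<alpha>+1) \<noteq> 0 \<and> Rd (s-\<alpha>+1) \<noteq> 0 \<and> Rw (s-\<alpha>+1) \<noteq> 0 \<and> w (s-\<alpha>+1) \<noteq> 0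
     \<and> Rw (s-1+\<alpha>) \<noteq> 0 \<and> Rw (s+\<alpha>) \<noteq> 0"
    if "s \<in> D" for s
    using nzR[OF that, of s 0 0] nzR[OF that, of "s-1" "-1" 0] nzR[OF that, of "s+1" 1 0]
      nzR[OF that, of "s-\<alpha>" 0 "-1"] nzR[OF that, of "s-\<alpha>-1" "-1" "-1"] nzR[OF that, of "s-\<alpha>+1" 1 "-1"]
      nzR[OF that, of "s-1+\<alpha>" "-1" 1] nzR[OF that, of "s+\<alpha>" 0 1]
    by (simp_all add: algebra_simps)
  have fact1: "frakH sg sr dx nx w Rs Rm A f s = bop \<alpha> w Rs Rm Rd Rw A (aop \<alpha> Rs Rm Rd Rw A f) s"
    if "s \<in> D" for f s
  proof -
    note N = nzs[OF that]
    have "frakH sg sr dx nx w Rs Rm A f s = 1 / w s * of_real (A s) *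
   (- (Rm (s-1) * Rs s / (Rd (s-1))\<^sup>2) * f (s-1) / of_real (A (s-1))
    - (Rm s * Rs (s+1) / (Rd s)\<^sup>2) * f (s+1) / of_real (A (s+1))
    + ((Rm s)\<^sup>2 / (Rd s)\<^sup>2 + (Rs s)\<^sup>2 / (Rd (s-1))\<^sup>2) * f s / of_real (A s))"
      using H_eq[of A s sg sr dx nx w Rs Rm f] hA hs hm hd hn by simp
    also have "\<dots> = bop \<alpha> w Rs Rm Rd Rw A (aop \<alpha> Rs Rm Rd Rw A f) s"
    proof -
      have e: "bop \<alpha> w Rs Rm Rd Rw A (aop \<alpha> Rs Rm Rd Rw A f) s =
    of_real (A s) / w s * (Rs s / Rd (s-1) * (Rs s / Rd (s-1) * f s / of_real (A s)
        - Rm (s-1) / Rd (s-1) * f (s-1) / of_real (A (s-1)))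
      - Rm s / Rd s * (Rs (s+1) / Rd s * f (s+1) / of_real (A (s+1))
        - Rm s / Rd s * f s / of_real (A s)))"
        by (rule ba_eq) (use N hA in auto)
      show ?thesis unfolding e using N hA by (simp add: field_simps power2_eq_square)
    qed
    finally show ?thesis .
  qed
  define C1 where "C1 = (\<lambda>s. nx s / w (s - \<alpha>)
                 * (Rw (s - 1) * Rw s / (Rd (s - \<alpha> - 1) * Rd (s - \<alpha>)))
                 * (Rs (s - \<alpha>) * Rm (s - \<alpha>) / (Rs s * Rm (s - 1))))"
  define C2 where "C2 = (\<lambda>s. 1 / dx (s - \<alpha>) * (sg (s - \<alpha> + 1) / w (s - \<alpha> + 1) + sr (s - \<alpha>) / w (s - \<alpha>))
                 - of_real vs * (1 / w s) * (sg s / nx s + sr s / dx s))"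
  define P where "P = (\<lambda>s. - (of_real (A s) / Rw s * (Rm (s-\<alpha>) / Rd (s-\<alpha>) / w (s-\<alpha>)) * (Rs (s-\<alpha>) / Rd (s-\<alpha>-1) * Rw (s-1) / of_real (A (s-1))))
      + of_real vs * (of_real (A s) / w s * (Rs s / Rd (s-1)) * (Rm (s-1) / Rd (s-1) / of_real (A (s-1)))))"
  define Q where "Q = (\<lambda>s. of_real (A s) / Rw s * (Rs (s-\<alpha>+1) / Rd (s-\<alpha>) / w (s-\<alpha>+1)) * (Rs (s-\<alpha>+1) / Rd (s-\<alpha>) * Rw s / of_real (A s))
      + of_real (A s) / Rw s * (Rm (s-\<alpha>) / Rd (s-\<alpha>) / w (s-\<alpha>)) * (Rm (s-\<alpha>) / Rd (s-\<alpha>) * Rw s / of_real (A s))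
      - of_real vs * (of_real (A s) / w s * (Rs s / Rd (s-1)) * (Rs s / Rd (s-1) / of_real (A s))
        + of_real (A s) / w s * (Rm s / Rd s) * (Rm s / Rd s / of_real (A s))))"
  define R where "R = (\<lambda>s. - (of_real (A s) / Rw s * (Rs (s-\<alpha>+1) / Rd (s-\<alpha>) / w (s-\<alpha>+1)) * (Rm (s-\<alpha>+1) / Rd (s-\<alpha>+1) * Rw (s+1) / of_real (A (s+1))))
      + of_real vs * (of_real (A s) / w s * (Rm s / Rd s) * (Rs (s+1) / Rd s / of_real (A (s+1)))))"
  have dec: "aop \<alpha> Rs Rm Rd Rw A (bop \<alpha> w Rs Rm Rd Rw A f) s
     - of_real vs * bop \<alpha> w Rs Rm Rd Rw A (aop \<alpha> Rs Rm Rd Rw A f) s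
     = P s * f (s-1) + Q s * f s + R s * f (s+1)" if "s \<in> D" for f s
    unfolding P_def Q_def R_def using nzs[OF that] hA by (intro decomp) auto
  have Qeq: "Q s = C2 s" if "s \<in> D" for s
  proof -
    note N = nzs[OF that]
    have "C2 s = 1 / (Rd (s - \<alpha>))\<^sup>2 * ((Rs (s - \<alpha> + 1))\<^sup>2 / w (s - \<alpha> + 1) + (Rm (s - \<alpha>))\<^sup>2 / w (s - \<alpha>))
                 - of_real vs * (1 / (Rw s)\<^sup>2) * ((Rs s)\<^sup>2 / (Rd (s-1))\<^sup>2 + (Rm s)\<^sup>2 / (Rd s)\<^sup>2)"
      unfolding C2_def using hs hm hd hw hn by simp
    moreover have "w s = (Rw s)\<^sup>2" using hw by simp
    ultimately show ?thesis unfolding Q_def using N hA by (simp add: field_simps power2_eq_square)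
  qed
  have Peq: "P s = (of_real (A s) * Rs s * Rm (s-1) / ((Rw s)\<^sup>2 * (Rd (s-1))\<^sup>2 * of_real (A (s-1))))
      * (of_real vs - C1 s)" if "s \<in> D" for s
  proof -
    note N = nzs[OF that]
    have "C1 s = (Rd (s-1))\<^sup>2 / w (s - \<alpha>)
                 * (Rw (s - 1) * Rw s / (Rd (s - \<alpha> - 1) * Rd (s - \<alpha>)))
                 * (Rs (s - \<alpha>) * Rm (s - \<alpha>) / (Rs s * Rm (s - 1)))"
      unfolding C1_def using hn by simp
    moreover have "w s = (Rw s)\<^sup>2" using hw by simp
    ultimately show ?thesis unfolding P_def using N hA by (simp add: field_simps power2_eq_square)
  qed
  have Req: "R s = (of_real (A s) * Rm s * Rs (s+1) / ((Rw s)\<^sup>2 * (Rd s)\<^sup>2 * of_real (A (s+1))))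
      * (of_real vs - C1 (s+1))" if "s \<in> D" for s
  proof -
    note N = nzs[OF that]
    have "C1 (s+1) = (Rd s)\<^sup>2 / w (s - \<alpha> + 1)
                 * (Rw s * Rw (s+1) / (Rd (s - \<alpha>) * Rd (s - \<alpha> + 1)))
                 * (Rs (s - \<alpha> + 1) * Rm (s - \<alpha> + 1) / (Rs (s+1) * Rm s))"
      unfolding C1_def using hn by (simp add: algebra_simps)
    moreover have "w s = (Rw s)\<^sup>2" using hw by simp
    ultimately show ?thesis unfolding R_def using N hA by (simp add: field_simps power2_eq_square)
  qed
  have iff: "(\<forall>f. \<forall>s\<in>D. aop \<alpha> Rs Rm Rd Rw A (bop \<alpha> w Rs Rm Rd Rw A f) s
            - of_real vs * bop \<alpha> w Rs Rm Rd Rw A (aop \<alpha> Rs Rm Rd Rw A f) s = of_real Lam * f s)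
     \<longleftrightarrow> (\<forall>s\<in>D. C1 s = of_real vs) \<and> (\<forall>s\<in>D. C2 s = of_real Lam)"
  proof
    assume H: "\<forall>f. \<forall>s\<in>D. aop \<alpha> Rs Rm Rd Rw A (bop \<alpha> w Rs Rm Rd Rw A f) s
            - of_real vs * bop \<alpha> w Rs Rm Rd Rw A (aop \<alpha> Rs Rm Rd Rw A f) s = of_real Lam * f s"
    have c1: "C1 s = of_real vs" if "s \<in> D" for s
    proof -
      have "P s = 0"
        using H[rule_format, OF that, of "\<lambda>t. if t = s - 1 then 1 else 0"] dec[OF that, of "\<lambda>t. if t = s - 1 then 1 else 0"]
        by simp
      moreover have "of_real (A s) * Rs s * Rm (s-1) / ((Rw s)\<^sup>2 * (Rd (s-1))\<^sup>2 * of_real (A (s-1))) \<noteq> 0"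
        using nzs[OF that] hA by simp
      ultimately show ?thesis using Peq[OF that] by simp
    qed
    have c2: "C2 s = of_real Lam" if "s \<in> D" for s
    proof -
      have "Q s = of_real Lam"
        using H[rule_format, OF that, of "\<lambda>t. if t = s then 1 else 0"] dec[OF that, of "\<lambda>t. if t = s then 1 else 0"]
        by simp
      then show ?thesis using Qeq[OF that] by simp
    qed
    show "(\<forall>s\<in>D. C1 s = of_real vs) \<and> (\<forall>s\<in>D. C2 s = of_real Lam)" using c1 c2 by blast
  next
    assume H: "(\<forall>s\<in>D. C1 s = of_real vs) \<and> (\<forall>s\<in>D. C2 s = of_real Lam)"
    show "\<forall>f. \<forall>s\<in>D. aop \<alpha> Rs Rm Rd Rw A (bop \<alpha> w Rs Rm Rd Rw A f) s
            - of_real vs * bop \<alpha> w Rs Rm Rd Rw A (aop \<alpha> Rs Rm Rd Rw A f) s = of_real Lam * f s"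
    proof (intro allI ballI)
      fix f s assume s: "s \<in> D"
      have "P s = 0" using Peq[OF s] H s by simp
      moreover have "R s = 0" using Req[OF s] H Dp[OF s] by simp
      moreover have "Q s = of_real Lam" using Qeq[OF s] H s by simp
      ultimately show "aop \<alpha> Rs Rm Rd Rw A (bop \<alpha> w Rs Rm Rd Rw A f) s
            - of_real vs * bop \<alpha> w Rs Rm Rd Rw A (aop \<alpha> Rs Rm Rd Rw A f) s = of_real Lam * f s"
        using dec[OF s] by simp
    qed
  qed
  show ?thesis using fact1 iff unfolding D_def C1_def C2_def by blast
qed


theorem theorem2:
  fixes q c1 c2 c3 \<alpha> vs Lam :: real
    and st tt :: "real poly"
    and A :: "real \<Rightarrow> real"
    and Rs Rm Rd Rw :: "real \<Rightarrow> complex"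
  assumes "q > 0" and "q \<noteq> 1"
    and "degree st \<le> 2" and "degree tt \<le> 1"
    and "continuous_on UNIV A" and "\<forall>s. A s \<noteq> 0"
    and "\<forall>s. (Rs s)\<^sup>2 = sig st tt q c1 c2 c3 s"
    and "\<forall>s. (Rm s)\<^sup>2 = sigref st tt q c1 c2 c3 s"
    and "\<forall>s. (Rd s)\<^sup>2 = Dx (latx q c1 c2 c3) s"
    and "\<forall>s. (Rw s)\<^sup>2 = Nx1 (latx q c1 c2 c3) s"
  shows
   "let X = latx q c1 c2 c3; sg = sig st tt q c1 c2 c3; sr = sigref st tt q c1 c2 c3;
        dx = Dx X; nx = Nx X; w = Nx1 X;
        D = gooddom \<alpha> sg sr dx w;
        a = aop \<alpha> Rs Rm Rd Rw A; b = bop \<alpha> w Rs Rm Rd Rw A;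
        HH = frakH sg sr dx nx w Rs Rm A
    in (\<forall>f. \<forall>s\<in>D. HH f s = b (a f) s)
     \<and> ((\<forall>f. \<forall>s\<in>D. a (b f) s - of_real vs * b (a f) s = of_real Lam * f s)
        \<longleftrightarrow>
        (\<forall>s\<in>D. nx s / w (s - \<alpha>)
                 * (Rw (s - 1) * Rw s / (Rd (s - \<alpha> - 1) * Rd (s - \<alpha>)))
                 * (Rs (s - \<alpha>) * Rm (s - \<alpha>) / (Rs s * Rm (s - 1))) = of_real vs)
      \<and> (\<forall>s\<in>D. 1 / dx (s - \<alpha>) * (sg (s - \<alpha> + 1) / w (s - \<alpha> + 1) + sr (s - \<alpha>) / w (s - \<alpha>))
                 - of_real vs * (1 / w s) * (sg s / nx s + sr s / dx s) = of_real Lam))"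
proof -
  have hn: "\<forall>t. Nx (latx q c1 c2 c3) t = (Rd (t-1))\<^sup>2"
    using assms(9) by (simp add: Nx_def Dx_def)
  show ?thesis unfolding Let_def
    by (rule core[OF assms(6) assms(7) assms(8) assms(9) assms(10) hn])
qed

end
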